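(* Let $d\ge1$ and consider the $d$-dimensional P-RAN process (see context). For $k\ge d+1$ let $P(k)=\lim_{t\to\infty}\mathbb{E}[N_t(k)]/(d+2+t)$, where $N_t(k)$ is the number of vertices of degree $k$ after $t$ steps. Then $$P(d+1)=\frac12,\qquad P(k)=\frac{dk-d^2-d+1}{dk-d^2+d+2}\,P(k-1)\quad\text{for } k>d+1.$$
   Context: P-RAN process in dimension $d$: at step $0$ the graph is a complete graph on $d+2$ vertices and the list $C_0$ consists of its $d+2$ $(d+1)$-cliques. At each step a clique $c$ is chosen uniformly at random from the current list; a new vertex $v$ is added and joined to all $d+1$ vertices of $c$; $c$ remains in the list and the $d+1$ cliques $\{v\}\cup(c\setminus\{u\})$, $u\in c$, are appended. After $t$ steps the graph has $d+2+t$ vertices and the list has $d+2+t(d+1)$ cliques. Every vertex has degree at least $d+1$. *)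

theory Defs
  imports "HOL-Probability.Probability"
begin

text \<open>State of the P-RAN process: (number of vertices n, with vertex set {0..<n};
  edge set, each edge a 2-element set of vertices; list of (d+1)-cliques).\<close>
type_synonym pran_state = "nat \<times> nat set set \<times> nat set list"

definition pran_init :: "nat \<Rightarrow> pran_state" where
  "pran_init d =
     (d + 2,
      {{x, y} | x y. x < d + 2 \<and> y < d + 2 \<and> x \<noteq> y},
      map (\<lambda>u. {0..<d + 2} - {u}) [0..<d + 2])"

definition pran_extend :: "pran_state \<Rightarrow> nat set \<Rightarrow> pran_state" where
  "pran_extend s c =
     (case s of (n, E, C) \<Rightarrow>
       (Suc n,
        E \<union> {{n, u} | u. u \<in> c},
        C @ map (\<lambda>u. insert n (c - {u})) (sorted_list_of_set c)))"

definition pran_step :: "pran_state \<Rightarrow> pran_state pmf" where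
  "pran_step s =
     (case s of (n, E, C) \<Rightarrow>
       map_pmf (\<lambda>i. pran_extend s (C ! i)) (pmf_of_set {..<length C}))"

primrec pran :: "nat \<Rightarrow> nat \<Rightarrow> pran_state pmf" where
  "pran d 0 = return_pmf (pran_init d)"
| "pran d (Suc t) = bind_pmf (pran d t) pran_step"

definition degree :: "nat set set \<Rightarrow> nat \<Rightarrow> nat" where
  "degree E x = card {y. {x, y} \<in> E}"

definition num_deg :: "pran_state \<Rightarrow> nat \<Rightarrow> nat" where
  "num_deg s k = (case s of (n, E, C) \<Rightarrow> card {x. x < n \<and> degree E x = k})"

end

theory Submission
  imports Defs
begin


lemma exp_bind_finite:
  fixes f :: "'b \<Rightarrow> real"
  assumes fin: "finite (set_pmf M)" and finN: "\<And>x. x \<in> set_pmf M \<Longrightarrow> finite (set_pmf (N x))"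
  shows "measure_pmf.expectation (bind_pmf M N) f = measure_pmf.expectation M (\<lambda>x. measure_pmf.expectation (N x) f)"
proof -
  define S where "S = set_pmf (bind_pmf M N)"
  have finS: "finite S" unfolding S_def set_bind_pmf by (rule finite_UN_I[OF fin finN])
  have sub: "\<And>x. x \<in> set_pmf M \<Longrightarrow> set_pmf (N x) \<subseteq> S" by (auto simp: S_def)
  have "measure_pmf.expectation (bind_pmf M N) f = (\<Sum>a\<in>S. f a * pmf (bind_pmf M N) a)"
    by (rule integral_measure_pmf_real[OF finS]) (simp add: S_def)
  also have "\<dots> = (\<Sum>a\<in>S. f a * (\<Sum>x\<in>set_pmf M. pmf (N x) a * pmf M x))"
  proof (rule sum.cong[OF refl])
    fix a assume "a \<in> S"
    have "pmf (bind_pmf M N) a = (\<Sum>x\<in>set_pmf M. pmf (N x) a * pmf M x)"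
      unfolding pmf_bind by (rule integral_measure_pmf_real) (auto simp: fin)
    then show "f a * pmf (bind_pmf M N) a = f a * (\<Sum>x\<in>set_pmf M. pmf (N x) a * pmf M x)" by simp
  qed
  also have "\<dots> = (\<Sum>x\<in>set_pmf M. (\<Sum>a\<in>S. f a * pmf (N x) a) * pmf M x)"
    by (simp add: sum_distrib_left sum_distrib_right sum.swap[of _ S] mult.assoc)
  also have "\<dots> = (\<Sum>x\<in>set_pmf M. measure_pmf.expectation (N x) f * pmf M x)"
  proof (rule sum.cong[OF refl])
    fix x assume x: "x \<in> set_pmf M"
    have "measure_pmf.expectation (N x) f = (\<Sum>a\<in>S. f a * pmf (N x) a)"
      by (rule integral_measure_pmf_real) (use finS sub[OF x] in auto)
    then show "(\<Sum>a\<in>S. f a * pmf (N x) a) * pmf M x = measure_pmf.expectation (N x) f * pmf M x" by simp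
  qed
  also have "\<dots> = measure_pmf.expectation M (\<lambda>x. measure_pmf.expectation (N x) f)"
    by (rule integral_measure_pmf_real[symmetric]) (auto simp: fin)
  finally show ?thesis .
qed




lemma cesaro0:
  fixes z e :: "nat \<Rightarrow> real" and D :: real
  assumes e: "e \<longlonglongrightarrow> 0" and D: "D > 0" and step: "\<And>t. t \<ge> T0 \<Longrightarrow> \<bar>z (Suc t)\<bar> \<le> \<bar>z t\<bar> + \<bar>e t\<bar>"
  shows "(\<lambda>t. z t / (real t + D)) \<longlonglongrightarrow> 0"
proof (rule LIMSEQ_I)
  fix r :: real assume r: "0 < r"
  obtain T1 where T1: "\<And>s. s \<ge> T1 \<Longrightarrow> norm (e s - 0) < r/2"
    using LIMSEQ_D[OF e, of "r/2"] r by auto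
  define T where "T = max T0 T1"
  have bound: "\<bar>z t\<bar> \<le> \<bar>z T\<bar> + real (t - T) * (r/2)" if "t \<ge> T" for t
    using that
  proof (induction t rule: dec_induct)
    case base then show ?case by simp
  next
    case (step t)
    have a1: "\<bar>z (Suc t)\<bar> \<le> \<bar>z t\<bar> + \<bar>e t\<bar>" using step.hyps(1) by (intro assms(3)) (simp add: T_def)
    have a2: "\<bar>e t\<bar> < r/2" using T1[of t] step.hyps(1) by (simp add: T_def)
    have lt: "\<bar>z (Suc t)\<bar> < \<bar>z t\<bar> + r/2" using a1 a2 by linarith
    have eq: "real (Suc t - T) * (r/2) = real (t - T) * (r/2) + r/2"
      by (subst Suc_diff_le[OF step.hyps(1)]) (simp only: of_nat_Suc distrib_right mult_1_left)
    show ?case using lt step.IH eq by linarith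
  qed
  define N where "N = max T (nat \<lceil>2 * \<bar>z T\<bar> / r\<rceil>)"
  show "\<exists>no. \<forall>n\<ge>no. norm (z n / (real n + D) - 0) < r"
  proof (intro exI allI impI)
    fix n assume n: "n \<ge> N"
    then have nT: "n \<ge> T" by (simp add: N_def)
    have "real n \<ge> 2 * \<bar>z T\<bar> / r" using n unfolding N_def by linarith
    then have h: "2 * \<bar>z T\<bar> \<le> r * real n" using r by (simp add: field_simps)
    have Dr: "D * r > 0" using D r by simp
    have h2: "r/2 * (real n + D) = r * real n / 2 + D * r / 2" by (simp add: algebra_simps)
    have A: "\<bar>z T\<bar> < r/2 * (real n + D)" using h Dr h2 by linarith
    have B: "real (n - T) * (r/2) \<le> r/2 * (real n + D)" using r D nT by (simp add: of_nat_diff)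
    have pos: "real n + D > 0" using D by simp
    have "\<bar>z n\<bar> < r * (real n + D)" using bound[OF nT] A B by linarith
    then show "norm (z n / (real n + D) - 0) < r" using pos by (simp add: abs_divide field_simps)
  qed
qed

lemma rec_limit:
  fixes x y :: "nat \<Rightarrow> real"
  assumes rec: "\<And>t. x (Suc t) = (1 - \<alpha>/(real t + \<beta>)) * x t + y t"
  and y: "y \<longlonglongrightarrow> \<gamma>" and \<alpha>: "\<alpha> \<ge> 0" and \<beta>: "\<beta> > 0" and D: "D > 0"
  shows "(\<lambda>t. x t / (real t + D)) \<longlonglongrightarrow> \<gamma>/(1+\<alpha>)"
proof -
  define c where "c = \<gamma>/(1+\<alpha>)"
  have c: "c * (1 + \<alpha>) = \<gamma>" using \<alpha> by (simp add: c_def)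
  define z where "z t = x t - c * (real t + \<beta>)" for t
  define e where "e t = y t - \<gamma>" for t
  have zrec: "z (Suc t) = (1 - \<alpha>/(real t + \<beta>)) * z t + e t" for t
  proof -
    have ne: "real t + \<beta> \<noteq> 0" using \<beta> by linarith
    show ?thesis unfolding z_def e_def rec c[symmetric] using ne
      by (simp add: field_simps)
  qed
  have e0: "e \<longlonglongrightarrow> 0" unfolding e_def using tendsto_diff[OF y tendsto_const[of \<gamma>]] by simp
  have step: "\<bar>z (Suc t)\<bar> \<le> \<bar>z t\<bar> + \<bar>e t\<bar>" if "t \<ge> nat \<lceil>\<alpha>\<rceil>" for t
  proof -
    have "real t \<ge> \<alpha>" using that by linarith
    then have q0: "0 \<le> 1 - \<alpha>/(real t + \<beta>)" and q1: "1 - \<alpha>/(real t + \<beta>) \<le> 1"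
      using \<alpha> \<beta> by (simp_all add: field_simps)
    have "\<bar>(1 - \<alpha>/(real t + \<beta>)) * z t\<bar> \<le> \<bar>z t\<bar>"
      using q0 q1 by (simp add: abs_mult mult_left_le_one_le)
    then show ?thesis unfolding zrec by linarith
  qed
  have l1: "(\<lambda>t. z t / (real t + D)) \<longlonglongrightarrow> 0" by (rule cesaro0[OF e0 D step])
  have inv0: "(\<lambda>t. 1 / (real t + D)) \<longlonglongrightarrow> 0"
    apply (rule tendsto_divide_0[OF tendsto_const])
    apply (rule filterlim_at_top_imp_at_infinity)
    apply (subst add.commute)
    apply (rule filterlim_tendsto_add_at_top[OF tendsto_const])
    apply (rule filterlim_real_sequentially)
    done
  have l2: "(\<lambda>t. c + c * (\<beta> - D) * (1 / (real t + D))) \<longlonglongrightarrow> c + c * (\<beta> - D) * 0"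
    by (intro tendsto_intros inv0)
  have eq: "x t / (real t + D) = z t / (real t + D) + (c + c * (\<beta> - D) * (1 / (real t + D)))" for t
  proof -
    have ne: "real t + D \<noteq> 0" using D by linarith
    have a: "c + c * (\<beta> - D) * (1 / (real t + D)) = c * (real t + \<beta>) / (real t + D)"
      using ne by (simp add: field_simps)
    show ?thesis unfolding a z_def by (simp add: diff_divide_distrib)
  qed
  show ?thesis unfolding eq c_def[symmetric] using tendsto_add[OF l1 l2] by simp
qed




definition cnt :: "nat set list \<Rightarrow> nat \<Rightarrow> nat" where
  "cnt C x = length (filter (\<lambda>c. x \<in> c) C)"

definition edges_ok :: "nat \<Rightarrow> nat set set \<Rightarrow> bool" where
  "edges_ok n E = (\<forall>e\<in>E. \<exists>x y. e = {x,y} \<and> x < n \<and> y < n \<and> x \<noteq> y)"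

definition pinv :: "nat \<Rightarrow> nat \<Rightarrow> pran_state \<Rightarrow> bool" where
  "pinv d t s = (case s of (n,E,C) \<Rightarrow> n = d+2+t \<and> length C = d+2+t*(d+1) \<and>
     (\<forall>c\<in>set C. c \<subseteq> {..<n} \<and> card c = d+1) \<and> edges_ok n E \<and>
     (\<forall>x<n. d+1 \<le> degree E x \<and> cnt C x + d*d = d * degree E x + 1))"

lemma nbr_sub: "edges_ok n E \<Longrightarrow> {y. {x,y} \<in> E} \<subseteq> {..<n}"
  unfolding edges_ok_def by (auto simp: doubleton_eq_iff) 

lemma deg_old:
  assumes E: "edges_ok n E" and c: "c \<subseteq> {..<n}" and x: "x < n"
  shows "degree (E \<union> {{n,u}|u. u\<in>c}) x = degree E x + (if x\<in>c then 1 else 0)"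
proof -
  have fin: "finite {y. {x,y} \<in> E}" using nbr_sub[OF E] finite_subset by blast
  have nn: "n \<notin> {y. {x,y} \<in> E}" using nbr_sub[OF E, of x] by auto
  have eq: "{y. {x,y} \<in> E \<union> {{n,u}|u. u\<in>c}} = {y. {x,y} \<in> E} \<union> (if x \<in> c then {n} else {})"
    using x c by (auto simp: doubleton_eq_iff)
  show ?thesis unfolding degree_def eq using fin nn by (simp add: card_insert_if)
qed

lemma deg_new:
  assumes E: "edges_ok n E" and c: "c \<subseteq> {..<n}"
  shows "degree (E \<union> {{n,u}|u. u\<in>c}) n = card c"
proof -
  have nn: "{y. {n,y} \<in> E} = {}" using E unfolding edges_ok_def by (auto simp: doubleton_eq_iff)
  have eq: "{y. {n,y} \<in> E \<union> {{n,u}|u. u\<in>c}} = c"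
    using nn c by (auto simp: doubleton_eq_iff)
  show ?thesis unfolding degree_def eq ..
qed

lemma cnt_app: "cnt (A @ B) x = cnt A x + cnt B x" by (simp add: cnt_def)

lemma cnt_new:
  assumes fin: "finite c" and x: "x \<noteq> n"
  shows "cnt (map (\<lambda>u. insert n (c - {u})) (sorted_list_of_set c)) x = (if x \<in> c then card c - 1 else 0)"
proof -
  have "cnt (map (\<lambda>u. insert n (c - {u})) (sorted_list_of_set c)) x = card ({u. x \<in> insert n (c - {u})} \<inter> c)"
    unfolding cnt_def by (simp add: distinct_length_filter fin o_def)
  also have "{u. x \<in> insert n (c - {u})} \<inter> c = (if x \<in> c then c - {x} else {})" using x by auto
  finally show ?thesis using fin by simp
qed

lemma cnt_new_n:
  assumes fin: "finite c"
  shows "cnt (map (\<lambda>u. insert n (c - {u})) (sorted_list_of_set c)) n = card c"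
  unfolding cnt_def using fin by (simp add: distinct_length_filter o_def)

lemma cnt_zero: "\<forall>c\<in>set C. c \<subseteq> {..<n} \<Longrightarrow> cnt C n = 0"
  unfolding cnt_def by (auto simp: filter_empty_conv)

lemma pinv_init: "pinv d 0 (pran_init d)"
proof -
  let ?E = "{{x, y} | x y. x < d + 2 \<and> y < d + 2 \<and> x \<noteq> y}"
  let ?C = "map (\<lambda>u. {0..<d + 2} - {u}) [0..<d + 2]"
  have deg: "degree ?E x = d + 1" if "x < d+2" for x
  proof -
    have "{y. {x,y} \<in> ?E} = {..<d+2} - {x}" using that by (auto simp: doubleton_eq_iff)
    then show ?thesis using that by (simp add: degree_def)
  qed
  have cn: "cnt ?C x = d + 1" if "x < d+2" for x
  proof -
    have "cnt ?C x = card ({u. x \<in> {0..<d+2} - {u}} \<inter> {0..<d+2})"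
      unfolding cnt_def filter_map length_map
      by (simp only: distinct_length_filter[OF distinct_upt] o_def set_upt)
    also have "{u. x \<in> {0..<d+2} - {u}} \<inter> {0..<d+2} = {0..<d+2} - {x}" using that by auto
    finally show ?thesis using that by simp
  qed
  show ?thesis unfolding pinv_def pran_init_def edges_ok_def
    using deg cn by (auto simp: algebra_simps)
qed

lemma pinv_step:
  assumes inv: "pinv d t (n,E,C)" and c: "c \<in> set C"
  shows "pinv d (Suc t) (pran_extend (n,E,C) c)"
proof -
  have n: "n = d+2+t" and L: "length C = d+2+t*(d+1)"
    and cl: "\<forall>c\<in>set C. c \<subseteq> {..<n} \<and> card c = d+1" and E: "edges_ok n E"
    and dg: "\<forall>x<n. d+1 \<le> degree E x \<and> cnt C x + d*d = d * degree E x + 1"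
    using inv by (auto simp: pinv_def)
  have csub: "c \<subseteq> {..<n}" and ccard: "card c = d+1" using cl c by auto
  have cfin: "finite c" using ccard by (intro card_ge_0_finite) simp
  let ?E = "E \<union> {{n,u}|u. u\<in>c}"
  let ?N = "map (\<lambda>u. insert n (c - {u})) (sorted_list_of_set c)"
  have ext: "pran_extend (n,E,C) c = (Suc n, ?E, C @ ?N)" by (simp add: pran_extend_def)
  have len: "length (C @ ?N) = d+2+Suc t*(d+1)" using L ccard cfin by simp
  have cl': "\<forall>b\<in>set (C @ ?N). b \<subseteq> {..<Suc n} \<and> card b = d+1"
  proof
    fix b assume "b \<in> set (C @ ?N)"
    then consider "b \<in> set C" | u where "u \<in> c" "b = insert n (c - {u})" using cfin by auto
    then show "b \<subseteq> {..<Suc n} \<and> card b = d+1"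
    proof cases
      case 1
      then have "b \<subseteq> {..<n}" "card b = d+1" using cl by auto
      then show ?thesis by auto
    next
      case 2
      have "n \<notin> c - {u}" using csub by auto
      then have "card b = Suc (card (c - {u}))" using 2 cfin by simp
      also have "\<dots> = d + 1" using 2 cfin ccard by simp
      finally show ?thesis using 2 csub by auto
    qed
  qed
  have E': "edges_ok (Suc n) ?E" using E csub unfolding edges_ok_def by fastforce
  have dg': "d+1 \<le> degree ?E x \<and> cnt (C @ ?N) x + d*d = d * degree ?E x + 1" if x: "x < Suc n" for x
  proof (cases "x = n")
    case True
    then show ?thesis using deg_new[OF E csub] cnt_new_n[OF cfin] cnt_zero[of C n] cl ccard
      by (simp add: cnt_app algebra_simps)
  next
    case False
    then have xn: "x < n" using x by simp
    have d1: "degree ?E x = degree E x + (if x\<in>c then 1 else 0)" by (rule deg_old[OF E csub xn])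
    have c1: "cnt (C @ ?N) x = cnt C x + (if x \<in> c then card c - 1 else 0)"
      using cnt_new[OF cfin False] by (simp add: cnt_app)
    show ?thesis using d1 c1 dg xn ccard by (auto simp: algebra_simps)
  qed
  show ?thesis unfolding ext pinv_def using n len cl' E' dg' by auto
qed




lemma card_sum: "finite A \<Longrightarrow> real (card {x\<in>A. P x}) = (\<Sum>x\<in>A. if P x then 1 else 0)"
  by (simp add: sum.inter_filter[symmetric])

lemma pinv_len: "pinv d t (n,E,C) \<Longrightarrow> length C > 0"
  by (simp add: pinv_def)

lemma step_set:
  assumes "pinv d t (n,E,C)"
  shows "set_pmf (pran_step (n,E,C)) = (\<lambda>i. pran_extend (n,E,C) (C!i)) ` {..<length C}"
proof -
  have ne: "{..<length C} \<noteq> {}" using pinv_len[OF assms] by auto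
  show ?thesis by (simp add: pran_step_def set_pmf_of_set[OF ne finite_lessThan])
qed

lemma step_props:
  assumes "pinv d t s"
  shows "finite (set_pmf (pran_step s)) \<and> (\<forall>s'\<in>set_pmf (pran_step s). pinv d (Suc t) s')"
proof -
  obtain n E C where s: "s = (n,E,C)" by (cases s) auto
  show ?thesis using assms unfolding s step_set[OF assms[unfolded s]]
    by (auto intro!: pinv_step)
qed

lemma pran_supp: "finite (set_pmf (pran d t)) \<and> (\<forall>s\<in>set_pmf (pran d t). pinv d t s)"
proof (induction t)
  case 0 then show ?case using pinv_init by simp
next
  case (Suc t)
  then show ?case using step_props by (auto intro!: finite_UN_I)
qed

lemma exp_step:
  assumes "pinv d t (n,E,C)"
  shows "measure_pmf.expectation (pran_step (n,E,C)) f = (\<Sum>i<length C. f (pran_extend (n,E,C) (C!i))) / real (length C)"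
proof -
  have ne: "{..<length C} \<noteq> {}" using pinv_len[OF assms] by auto
  show ?thesis unfolding pran_step_def using integral_pmf_of_set[OF ne finite_lessThan] by simp
qed




definition Acoef :: "nat \<Rightarrow> nat \<Rightarrow> real" where
  "Acoef d j = real d * real j + 1 - real d ^ 2"

lemma num_deg_sum: "real (num_deg (n,E,C) j) = (\<Sum>x<n. if degree E x = j then 1 else 0)"
proof -
  have "{x. x < n \<and> degree E x = j} = {x\<in>{..<n}. degree E x = j}" by auto
  then show ?thesis using card_sum[of "{..<n}" "\<lambda>x. degree E x = j"] by (simp add: num_deg_def)
qed

lemma sum_if_const: "(\<Sum>x\<in>A. if P x then a else 0) = (a::real) * (\<Sum>x\<in>A. if P x then 1 else 0)"
  by (simp add: sum_distrib_left if_distrib cong: if_cong)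

lemma numdeg_ext:
  assumes inv: "pinv d t (n,E,C)" and c: "c \<in> set C"
  shows "real (num_deg (pran_extend (n,E,C) c) k) =
     (\<Sum>x<n. if degree E x + (if x\<in>c then 1 else 0) = k then 1 else 0) + (if k = d+1 then 1 else 0)"
proof -
  have E: "edges_ok n E" and csub: "c \<subseteq> {..<n}" and ccard: "card c = d+1"
    using inv c by (auto simp: pinv_def)
  let ?E = "E \<union> {{n,u}|u. u\<in>c}"
  have ext: "pran_extend (n,E,C) c = (Suc n, ?E, C @ map (\<lambda>u. insert n (c - {u})) (sorted_list_of_set c))"
    by (simp add: pran_extend_def)
  have "real (num_deg (pran_extend (n,E,C) c) k) = (\<Sum>x<Suc n. if degree ?E x = k then 1 else 0)"
    unfolding ext by (rule num_deg_sum)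
  also have "\<dots> = (\<Sum>x<n. if degree ?E x = k then 1 else 0) + (if degree ?E n = k then 1 else 0)"
    by simp
  also have "(\<Sum>x<n. if degree ?E x = k then 1 else 0) =
      (\<Sum>x<n. if degree E x + (if x\<in>c then 1 else 0) = k then 1 else 0)"
    by (rule sum.cong[OF refl]) (simp add: deg_old[OF E csub])
  also have "degree ?E n = d + 1" using deg_new[OF E csub] ccard by simp
  finally show ?thesis by (simp add: eq_commute)
qed

lemma cnt_real: "pinv d t (n,E,C) \<Longrightarrow> x < n \<Longrightarrow> real (cnt C x) = Acoef d (degree E x)"
proof -
  assume "pinv d t (n,E,C)" "x < n"
  then have "cnt C x + d*d = d * degree E x + 1" by (simp add: pinv_def)
  then have "real (cnt C x) + real d * real d = real d * real (degree E x) + 1"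
    by (metis of_nat_add of_nat_mult of_nat_1)
  then show ?thesis by (simp add: Acoef_def power2_eq_square)
qed

lemma cnt_sum: "(\<Sum>i<length C. if x \<in> C!i then 1 else 0) = real (cnt C x)"
proof -
  have "{i. i < length C \<and> x \<in> C!i} = {i\<in>{..<length C}. x \<in> C!i}" by auto
  then show ?thesis unfolding cnt_def length_filter_conv_card
    using card_sum[of "{..<length C}" "\<lambda>i. x \<in> C!i"] by simp
qed

lemma step_sum:
  assumes inv: "pinv d t (n,E,C)" and k: "k \<ge> 1"
  shows "(\<Sum>i<length C. real (num_deg (pran_extend (n,E,C) (C!i)) k)) =
     Acoef d (k-1) * real (num_deg (n,E,C) (k-1)) + (real (length C) - Acoef d k) * real (num_deg (n,E,C) k)
     + real (length C) * (if k = d+1 then 1 else 0)"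
proof -
  let ?L = "real (length C)"
  define g where "g x b = (if degree E x + (if x\<in>b then 1 else 0) = k then 1 else 0 :: real)" for x b
  have g: "g x b = (if degree E x = k-1 then (if x\<in>b then 1 else 0) else 0) +
                   (if degree E x = k then 1 - (if x\<in>b then 1 else 0) else 0)" for x b
    using k unfolding g_def by auto
  have "(\<Sum>i<length C. real (num_deg (pran_extend (n,E,C) (C!i)) k)) =
        (\<Sum>i<length C. (\<Sum>x<n. g x (C!i)) + (if k = d+1 then 1 else 0))"
    by (rule sum.cong[OF refl]) (simp add: numdeg_ext[OF inv] g_def)
  also have "\<dots> = (\<Sum>x<n. (\<Sum>i<length C. g x (C!i))) + ?L * (if k = d+1 then 1 else 0)"
    by (simp add: sum.distrib sum.swap[of _ "{..<n}"])
  also have "(\<Sum>x<n. (\<Sum>i<length C. g x (C!i))) =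
      (\<Sum>x<n. (if degree E x = k-1 then Acoef d (k-1) else 0) + (if degree E x = k then ?L - Acoef d k else 0))"
  proof (rule sum.cong[OF refl])
    fix x assume "x \<in> {..<n}"
    then have xn: "x < n" by simp
    have "(\<Sum>i<length C. g x (C!i)) =
      (if degree E x = k-1 then real (cnt C x) else 0) + (if degree E x = k then ?L - real (cnt C x) else 0)"
      unfolding g by (simp add: sum.distrib sum_subtractf cnt_sum)
    also have "\<dots> = (if degree E x = k-1 then Acoef d (k-1) else 0) + (if degree E x = k then ?L - Acoef d k else 0)"
      using cnt_real[OF inv xn] by simp
    finally show "(\<Sum>i<length C. g x (C!i)) = \<dots>" .
  qed
  also have "\<dots> = Acoef d (k-1) * real (num_deg (n,E,C) (k-1)) + (?L - Acoef d k) * real (num_deg (n,E,C) k)"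
    unfolding num_deg_sum
    by (simp only: sum.distrib sum_if_const[where A="{..<n}" and a="Acoef d (k-1)"] sum_if_const[where A="{..<n}" and a="?L - Acoef d k"])
  finally show ?thesis .
qed




definition ee :: "nat \<Rightarrow> nat \<Rightarrow> nat \<Rightarrow> real" where
  "ee d t k = measure_pmf.expectation (pran d t) (\<lambda>s. real (num_deg s k))"

definition Lb :: "nat \<Rightarrow> nat \<Rightarrow> real" where
  "Lb d t = real (d+2+t*(d+1))"

lemma E_sum: "finite (set_pmf M) \<Longrightarrow> measure_pmf.expectation M f = (\<Sum>s\<in>set_pmf M. f s * pmf M s)"
  by (rule integral_measure_pmf_real) auto

lemma inner_step:
  assumes inv: "pinv d t s" and k: "k \<ge> 1"
  shows "measure_pmf.expectation (pran_step s) (\<lambda>s. real (num_deg s k)) =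
    (1 - Acoef d k / Lb d t) * real (num_deg s k) + Acoef d (k-1) / Lb d t * real (num_deg s (k-1))
    + (if k = d+1 then 1 else 0)"
proof -
  obtain n E C where s: "s = (n,E,C)" by (cases s) auto
  have inv': "pinv d t (n,E,C)" using inv s by simp
  have L: "real (length C) = Lb d t" using inv' by (simp add: pinv_def Lb_def)
  have "(0::nat) < d+2+t*(d+1)" by simp
  then have Lpos: "Lb d t > 0" unfolding Lb_def by (simp only: of_nat_0_less_iff)
  show ?thesis unfolding s exp_step[OF inv'] step_sum[OF inv' k] L
    using Lpos by (simp add: field_simps)
qed

lemma exp_rec:
  assumes k: "k \<ge> 1"
  shows "ee d (Suc t) k = (1 - Acoef d k / Lb d t) * ee d t k + Acoef d (k-1) / Lb d t * ee d t (k-1)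
      + (if k = d+1 then 1 else 0)"
proof -
  let ?M = "pran d t"
  have fin: "finite (set_pmf ?M)" and sup: "\<And>s. s \<in> set_pmf ?M \<Longrightarrow> pinv d t s"
    using pran_supp[of d t] by auto
  have finN: "\<And>s. s \<in> set_pmf ?M \<Longrightarrow> finite (set_pmf (pran_step s))"
    using step_props sup by blast
  have "ee d (Suc t) k = measure_pmf.expectation ?M (\<lambda>s. measure_pmf.expectation (pran_step s) (\<lambda>s. real (num_deg s k)))"
    unfolding ee_def by (simp add: exp_bind_finite[OF fin finN])
  also have "\<dots> = (\<Sum>s\<in>set_pmf ?M. ((1 - Acoef d k / Lb d t) * real (num_deg s k) + Acoef d (k-1) / Lb d t * real (num_deg s (k-1))
    + (if k = d+1 then 1 else 0)) * pmf ?M s)"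
    unfolding E_sum[OF fin] by (rule sum.cong[OF refl]) (simp add: inner_step[OF sup k])
  also have "\<dots> = (1 - Acoef d k / Lb d t) * (\<Sum>s\<in>set_pmf ?M. real (num_deg s k) * pmf ?M s)
      + Acoef d (k-1) / Lb d t * (\<Sum>s\<in>set_pmf ?M. real (num_deg s (k-1)) * pmf ?M s)
      + (if k = d+1 then 1 else 0) * (\<Sum>s\<in>set_pmf ?M. pmf ?M s)"
    by (simp add: sum.distrib sum_distrib_left distrib_right mult.assoc)
  also have "(\<Sum>s\<in>set_pmf ?M. pmf ?M s) = 1" by (rule sum_pmf_eq_1[OF fin]) simp
  finally show ?thesis unfolding ee_def E_sum[OF fin] by simp
qed

lemma ee_d: "ee d t d = 0"
proof -
  have "\<And>s. s \<in> set_pmf (pran d t) \<Longrightarrow> num_deg s d = 0"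
  proof -
    fix s assume "s \<in> set_pmf (pran d t)"
    then have inv: "pinv d t s" using pran_supp by blast
    obtain n E C where s: "s = (n,E,C)" by (cases s) auto
    have "{x. x < n \<and> degree E x = d} = {}" using inv unfolding s pinv_def by fastforce
    then show "num_deg s d = 0" by (simp add: s num_deg_def)
  qed
  then show ?thesis unfolding ee_def E_sum[OF pran_supp[THEN conjunct1]] by simp
qed




primrec Qs :: "nat \<Rightarrow> nat \<Rightarrow> real" where
  "Qs d 0 = 1/2"
| "Qs d (Suc j) = (real d * real (d+1+Suc j) - real d ^ 2 - real d + 1) /
              (real d * real (d+1+Suc j) - real d ^ 2 + real d + 2) * Qs d j"

lemma frac_lem: "(m::real) > 0 \<Longrightarrow> m + A > 0 \<Longrightarrow> a / m * q / (1 + A / m) = a / (m + A) * q"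
  by (simp add: field_simps)

lemma Acoef_pos: "k \<ge> d+1 \<Longrightarrow> Acoef d k \<ge> real d + 1"
proof -
  assume "k \<ge> d+1"
  then have "real k \<ge> real d + 1" by simp
  then have "real d * real k \<ge> real d * (real d + 1)" by (simp add: mult_left_mono)
  then show ?thesis by (simp add: Acoef_def power2_eq_square algebra_simps)
qed

lemma main_lim: "\<forall>D>0. (\<lambda>t. ee d t (d+1+j) / (real t + D)) \<longlonglongrightarrow> Qs d j"
proof (induction j)
  case 0
  show ?case
  proof (intro allI impI)
    fix D :: real assume D: "D > 0"
    let ?k = "d+1"
    define \<alpha> where "\<alpha> = Acoef d ?k / (real d + 1)"
    define \<beta> where "\<beta> = (real d + 2) / (real d + 1)"
    have Lb: "Lb d t = (real d + 1) * (real t + \<beta>)" for t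
      unfolding Lb_def \<beta>_def by (simp add: field_simps)
    have rec: "ee d (Suc t) ?k = (1 - \<alpha> / (real t + \<beta>)) * ee d t ?k + (\<lambda>t. 1) t" for t
    proof -
      have "ee d (Suc t) ?k = (1 - Acoef d ?k / Lb d t) * ee d t ?k + 1"
        using exp_rec[of ?k d t] ee_d[of d t] by simp
      moreover have "Acoef d ?k / Lb d t = \<alpha> / (real t + \<beta>)"
        unfolding Lb \<alpha>_def by simp
      ultimately show ?thesis by simp
    qed
    have Ak: "Acoef d ?k = real d + 1" by (simp add: Acoef_def power2_eq_square algebra_simps)
    have \<alpha>: "\<alpha> = 1" unfolding \<alpha>_def Ak by simp
    have \<beta>: "\<beta> > 0" unfolding \<beta>_def by simp
    have "(\<lambda>t. ee d t ?k / (real t + D)) \<longlonglongrightarrow> 1 / (1 + \<alpha>)"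
      by (rule rec_limit[OF rec tendsto_const _ \<beta> D]) (simp add: \<alpha>)
    then show "(\<lambda>t. ee d t (d + 1 + 0) / (real t + D)) \<longlonglongrightarrow> Qs d 0" by (simp add: \<alpha>)
  qed
next
  case (Suc j)
  show ?case
  proof (intro allI impI)
    fix D :: real assume D: "D > 0"
    let ?k = "d+1+Suc j"
    define \<alpha> where "\<alpha> = Acoef d ?k / (real d + 1)"
    define \<beta> where "\<beta> = (real d + 2) / (real d + 1)"
    have \<beta>: "\<beta> > 0" unfolding \<beta>_def by simp
    have Lb: "Lb d t = (real d + 1) * (real t + \<beta>)" for t
      unfolding Lb_def \<beta>_def by (simp add: field_simps)
    define y where "y t = Acoef d (d+1+j) / (real d + 1) * (ee d t (d+1+j) / (real t + \<beta>))" for t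
    have rec: "ee d (Suc t) ?k = (1 - \<alpha> / (real t + \<beta>)) * ee d t ?k + y t" for t
    proof -
      have km: "?k - 1 = d+1+j" by simp
      have "ee d (Suc t) ?k = (1 - Acoef d ?k / Lb d t) * ee d t ?k + Acoef d (d+1+j) / Lb d t * ee d t (d+1+j)"
        using exp_rec[of ?k d t] km by simp
      moreover have "Acoef d ?k / Lb d t = \<alpha> / (real t + \<beta>)"
        unfolding Lb \<alpha>_def by simp
      moreover have "Acoef d (d+1+j) / Lb d t * ee d t (d+1+j) = y t"
        unfolding Lb y_def by simp
      ultimately show ?thesis by simp
    qed
    have y: "y \<longlonglongrightarrow> Acoef d (d+1+j) / (real d + 1) * Qs d j"
      unfolding y_def using Suc.IH \<beta> by (intro tendsto_intros) auto
    have \<alpha>: "\<alpha> \<ge> 0" unfolding \<alpha>_def using Acoef_pos[of d ?k] by simp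
    have lim: "(\<lambda>t. ee d t ?k / (real t + D)) \<longlonglongrightarrow> Acoef d (d+1+j) / (real d + 1) * Qs d j / (1 + \<alpha>)"
      by (rule rec_limit[OF rec y \<alpha> \<beta> D])
    have "Acoef d (d+1+j) / (real d + 1) * Qs d j / (1 + \<alpha>) = Qs d (Suc j)"
    proof -
      have A1: "Acoef d (d+1+j) = real d * real ?k - real d ^ 2 - real d + 1"
        by (simp add: Acoef_def algebra_simps)
      have A2: "real d + 1 + Acoef d ?k = real d * real ?k - real d ^ 2 + real d + 2"
        by (simp add: Acoef_def algebra_simps)
      have pos: "real d + 1 + Acoef d ?k > 0" using Acoef_pos[of d ?k] by simp
      have "Acoef d (d+1+j) / (real d + 1) * Qs d j / (1 + \<alpha>) = Acoef d (d+1+j) / (real d + 1 + Acoef d ?k) * Qs d j"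
        unfolding \<alpha>_def by (rule frac_lem) (use pos in simp_all)
      also have "\<dots> = Qs d (Suc j)" unfolding A1 A2 by simp
      finally show ?thesis .
    qed
    then show "(\<lambda>t. ee d t ?k / (real t + D)) \<longlonglongrightarrow> Qs d (Suc j)" using lim by simp
  qed
qed

theorem mainTheorem3:
  fixes d :: nat
  assumes "d \<ge> 1"
  shows "\<exists>P :: nat \<Rightarrow> real.
     (\<forall>k \<ge> d + 1.
        (\<lambda>t. measure_pmf.expectation (pran d t) (\<lambda>s. real (num_deg s k)) / real (d + 2 + t))
          \<longlonglongrightarrow> P k)
   \<and> P (d + 1) = 1 / 2
   \<and> (\<forall>k > d + 1.
        P k = (real d * real k - real d ^ 2 - real d + 1) /
              (real d * real k - real d ^ 2 + real d + 2) * P (k - 1))"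
proof (intro exI conjI allI impI)
  let ?P = "\<lambda>k. Qs d (k - (d+1))"
  fix k assume k: "k \<ge> d+1"
  have kk: "d + 1 + (k - (d+1)) = k" using k by simp
  have "(\<lambda>t. ee d t k / (real t + real (d+2))) \<longlonglongrightarrow> ?P k"
    using main_lim[of d "k - (d+1)"] kk by (metis of_nat_0_less_iff zero_less_Suc add_2_eq_Suc')
  moreover have "(\<lambda>t. measure_pmf.expectation (pran d t) (\<lambda>s. real (num_deg s k)) / real (d + 2 + t))
     = (\<lambda>t. ee d t k / (real t + real (d+2)))"
    by (rule ext) (simp add: ee_def algebra_simps)
  ultimately show "(\<lambda>t. measure_pmf.expectation (pran d t) (\<lambda>s. real (num_deg s k)) / real (d + 2 + t)) \<longlonglongrightarrow> ?P k"
    by simp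
next
  show "Qs d (d + 1 - (d+1)) = 1/2" by simp
next
  fix k assume k: "k > d+1"
  then obtain j where j: "k - (d+1) = Suc j" and j2: "k - 1 - (d+1) = j"
    by (metis Suc_diff_Suc diff_Suc_1 diff_diff_left Suc_eq_plus1 add.commute)
  have kj: "d+1+Suc j = k" using k j by simp
  show "Qs d (k - (d+1)) = (real d * real k - real d ^ 2 - real d + 1) /
              (real d * real k - real d ^ 2 + real d + 2) * Qs d (k - 1 - (d+1))"
    unfolding j j2 using kj by simp
qed


end
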